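(* Let $\mu$ be a probability measure with bounded support contained in $[0,\infty)$, let $b=\sup\operatorname{supp}\mu$, and fix $q\in(0,1]$. Then the map $\Phi:(b,\infty)\to\mathbb R$, $$\Phi(x)=\frac{2\,D_\mu(x)\,\varphi_\mu(x;1)}{D_\mu'(x)},$$ is continuous, nonincreasing, and takes values in $[-1,0]$.
   Context: For $s\in[0,1]$ and $x>b$, set $\varphi_\mu(x;s)=s\int\frac{x}{x^2-t^2}\,d\mu(t)+\frac{1-s}{x}$, and let $\varphi_\mu'(x;s)$ denote its derivative in $x$, namely $\varphi_\mu'(x;s)=-\big(s\int\frac{x^2+t^2}{(x^2-t^2)^2}\,d\mu(t)+\frac{1-s}{x^2}\big)$. Define $D_\mu(x)=\varphi_\mu(x;1)\,\varphi_\mu(x;q)$, with derivative $D_\mu'(x)=\varphi_\mu'(x;1)\varphi_\mu(x;q)+\varphi_\mu(x;1)\varphi_\mu'(x;q)$. *)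

theory Defs
  imports "HOL-Probability.Probability"
begin

definition msupp :: "real measure \<Rightarrow> real set" where
  "msupp \<mu> = {x. \<forall>e>0. emeasure \<mu> (ball x e) > 0}"

definition phi :: "real measure \<Rightarrow> real \<Rightarrow> real \<Rightarrow> real" where
  "phi \<mu> x s = s * (\<integral>t. x / (x\<^sup>2 - t\<^sup>2) \<partial>\<mu>) + (1 - s) / x"

definition phi' :: "real measure \<Rightarrow> real \<Rightarrow> real \<Rightarrow> real" where
  "phi' \<mu> x s = - (s * (\<integral>t. (x\<^sup>2 + t\<^sup>2) / (x\<^sup>2 - t\<^sup>2)\<^sup>2 \<partial>\<mu>) + (1 - s) / x\<^sup>2)"

definition Dmu :: "real measure \<Rightarrow> real \<Rightarrow> real \<Rightarrow> real" where
  "Dmu \<mu> q x = phi \<mu> x 1 * phi \<mu> x q"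

definition Dmu' :: "real measure \<Rightarrow> real \<Rightarrow> real \<Rightarrow> real" where
  "Dmu' \<mu> q x = phi' \<mu> x 1 * phi \<mu> x q + phi \<mu> x 1 * phi' \<mu> x q"

definition Phi :: "real measure \<Rightarrow> real \<Rightarrow> real \<Rightarrow> real" where
  "Phi \<mu> q x = 2 * Dmu \<mu> q x * phi \<mu> x 1 / Dmu' \<mu> q x"

end

theory Submission
  imports Defs
begin


lemma deriv_int:
  fixes M :: "real measure" and f f' :: "real \<Rightarrow> real \<Rightarrow> real"
  assumes P: "prob_space M"
    and AE: "AE t in M. t \<in> K" and K: "compact K"
    and x0: "x0 \<in> U" and U: "open U"
    and deriv: "\<And>x t. x \<in> U \<Longrightarrow> t \<in> K \<Longrightarrow> ((\<lambda>x. f x t) has_real_derivative f' x t) (at x)"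
    and cont: "continuous_on (U \<times> K) (\<lambda>(x,t). f' x t)"
    and intf: "\<And>x. x \<in> U \<Longrightarrow> integrable M (f x)"
    and intf': "integrable M (f' x0)"
  shows "((\<lambda>x. \<integral>t. f x t \<partial>M) has_real_derivative (\<integral>t. f' x0 t \<partial>M)) (at x0)"
proof -
  interpret prob_space M by fact
  obtain d0 where d0: "d0 > 0" "cball x0 d0 \<subseteq> U"
    using U x0 open_contains_cball by blast
  have uc: "uniformly_continuous_on (cball x0 d0 \<times> K) (\<lambda>(x,t). f' x t)"
    by (intro compact_uniformly_continuous continuous_on_subset[OF cont] compact_Times K compact_cball)
      (use d0 in auto)
  show ?thesis
    unfolding has_field_derivative_iff
  proof (rule LIM_I)
    fix r :: real assume r: "0 < r"
    obtain d where d: "d > 0" and dd: "\<And>p p'. p \<in> cball x0 d0 \<times> K \<Longrightarrow> p' \<in> cball x0 d0 \<times> K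
        \<Longrightarrow> dist p' p < d \<Longrightarrow> dist ((\<lambda>(x,t). f' x t) p') ((\<lambda>(x,t). f' x t) p) < r/2"
    proof -
      have "r/2 > 0" using r by simp
      from uc[unfolded uniformly_continuous_on_def, rule_format, OF this] obtain d where
        "d > 0" "\<forall>p\<in>cball x0 d0 \<times> K. \<forall>p'\<in>cball x0 d0 \<times> K. dist p' p < d \<longrightarrow>
           dist ((\<lambda>(x,t). f' x t) p') ((\<lambda>(x,t). f' x t) p) < r/2" by blast
      then show ?thesis using that by blast
    qed
    show "\<exists>s>0. \<forall>y. y \<noteq> x0 \<and> norm (y - x0) < s \<longrightarrow>
        norm (((\<integral>t. f y t \<partial>M) - (\<integral>t. f x0 t \<partial>M)) / (y - x0) - (\<integral>t. f' x0 t \<partial>M)) < r"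
    proof (intro exI[of _ "min d d0"] conjI allI impI)
      show "0 < min d d0" using d d0 by simp
      fix y assume y: "y \<noteq> x0 \<and> norm (y - x0) < min d d0"
      have yU: "y \<in> cball x0 d0" using y by (auto simp: dist_norm norm_minus_commute)
      have pt: "\<bar>(f y t - f x0 t) / (y - x0) - f' x0 t\<bar> \<le> r/2" if t: "t \<in> K" for t
      proof -
        have der: "\<And>z. min x0 y \<le> z \<Longrightarrow> z \<le> max x0 y \<Longrightarrow> ((\<lambda>x. f x t) has_real_derivative f' z t) (at z)"
        proof -
          fix z assume "min x0 y \<le> z" "z \<le> max x0 y"
          then have "z \<in> cball x0 d0" using y by (auto simp: dist_norm abs_if split: if_splits)
          then show "((\<lambda>x. f x t) has_real_derivative f' z t) (at z)" using d0 t deriv by auto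
        qed
        obtain z where z: "min x0 y < z" "z < max x0 y"
          "f y t - f x0 t = (y - x0) * f' z t"
        proof (cases "x0 < y")
          case True
          from MVT2[OF True, of "\<lambda>x. f x t" "\<lambda>z. f' z t"] der True show ?thesis using that by auto
        next
          case False
          then have "y < x0" using y by auto
          from MVT2[OF this, of "\<lambda>x. f x t" "\<lambda>z. f' z t"] der False obtain z where
            "y < z" "z < x0" "f x0 t - f y t = (x0 - y) * f' z t" by auto
          then show ?thesis using that[of z] False by (auto simp: algebra_simps)
        qed
        have zc: "z \<in> cball x0 d0" "\<bar>z - x0\<bar> < d" using z y by (auto simp: dist_norm abs_if split: if_splits)
        have "dist (f' z t) (f' x0 t) < r/2"
          using dd[of "(x0,t)" "(z,t)"] zc d0 t by (auto simp: dist_Pair_Pair dist_real_def)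
        moreover have "(f y t - f x0 t) / (y - x0) = f' z t" using z y by auto
        ultimately show ?thesis by (simp add: dist_real_def)
      qed
      have iy: "integrable M (f y)" "integrable M (f x0)" using intf yU d0 x0 by auto
      have "((\<integral>t. f y t \<partial>M) - (\<integral>t. f x0 t \<partial>M)) / (y - x0) - (\<integral>t. f' x0 t \<partial>M)
          = (\<integral>t. (f y t - f x0 t) / (y - x0) - f' x0 t \<partial>M)"
        using iy intf' by (simp add: integral_diff)
      also have "\<bar>\<dots>\<bar> \<le> (\<integral>t. \<bar>(f y t - f x0 t) / (y - x0) - f' x0 t\<bar> \<partial>M)"
        by (rule integral_abs_bound)
      also have "\<dots> \<le> (\<integral>t. r/2 \<partial>M)"
      proof (rule integral_mono_AE)
        show "integrable M (\<lambda>t. \<bar>(f y t - f x0 t) / (y - x0) - f' x0 t\<bar>)"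
          using iy intf' by auto
        show "integrable M (\<lambda>t. r/2)" by simp
        show "AE t in M. \<bar>(f y t - f x0 t) / (y - x0) - f' x0 t\<bar> \<le> r/2"
          using AE by eventually_elim (rule pt)
      qed
      also have "\<dots> = r/2" using prob_space by simp
      finally show "norm (((\<integral>t. f y t \<partial>M) - (\<integral>t. f x0 t \<partial>M)) / (y - x0) - (\<integral>t. f' x0 t \<partial>M)) < r"
        using r by simp
    qed
  qed
qed




lemma null_interval:
  fixes M :: "real measure"
  assumes S: "sets M = sets borel"
    and H: "\<And>x. c \<le> x \<Longrightarrow> x \<le> d \<Longrightarrow> \<exists>e>0. emeasure M (ball x e) = 0"
  shows "emeasure M {c..d} = 0"
proof -
  have "\<forall>x. \<exists>e. c \<le> x \<and> x \<le> d \<longrightarrow> e > 0 \<and> emeasure M (ball x e) = 0"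
    using H by blast
  then obtain e where e: "\<And>x. c \<le> x \<Longrightarrow> x \<le> d \<Longrightarrow> e x > 0 \<and> emeasure M (ball x (e x)) = 0"
    by (rule choice[THEN exE]) blast
  have cov: "{c..d} \<subseteq> (\<Union>x\<in>{c..d}. ball x (e x))"
  proof
    fix x assume "x \<in> {c..d}"
    then have "x \<in> ball x (e x)" using e by auto
    then show "x \<in> (\<Union>x\<in>{c..d}. ball x (e x))" using \<open>x \<in> {c..d}\<close> by blast
  qed
  obtain C where C: "C \<subseteq> {c..d}" "finite C" "{c..d} \<subseteq> (\<Union>x\<in>C. ball x (e x))"
    by (rule compactE_image[of "{c..d}" "{c..d}" "\<lambda>x. ball x (e x)", OF compact_Icc open_ball cov])
  have "emeasure M {c..d} \<le> emeasure M (\<Union>x\<in>C. ball x (e x))"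
    by (rule emeasure_mono[OF C(3)]) (unfold S, intro borel_open open_UN, auto)
  also have "\<dots> \<le> (\<Sum>x\<in>C. emeasure M (ball x (e x)))"
    by (rule emeasure_subadditive_finite[OF C(2)]) (unfold S, auto intro!: borel_open)
  also have "\<dots> = 0" using C(1) e by (intro sum.neutral) auto
  finally show ?thesis by simp
qed

lemma arch_aux:
  fixes t :: real assumes "0 < t"
  shows "\<exists>n::nat. t \<le> real n + 1 \<and> 1 / (real n + 1) \<le> t"
proof -
  obtain n :: nat where n: "max t (1/t) \<le> real n" using real_arch_simple by blast
  have "1 / (real n + 1) \<le> 1 / (1/t)"
    using n assms by (intro divide_left_mono) auto
  then show ?thesis using n assms by (intro exI[of _ n]) auto
qed

lemma supp_facts:
  fixes \<mu> :: "real measure" and b :: real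
  assumes P: "prob_space \<mu>"
    and S: "sets \<mu> = sets borel"
    and B: "bounded (msupp \<mu>)"
    and N: "msupp \<mu> \<subseteq> {0..}"
    and b: "b = Sup (msupp \<mu>)"
  shows "0 \<le> b" "AE t in \<mu>. 0 \<le> t \<and> t \<le> b"
proof -
  have ns: "\<exists>e>0. emeasure \<mu> (ball t e) = 0" if "t \<notin> msupp \<mu>" for t
    using that unfolding msupp_def by (auto simp: not_less)
  have sp: "space \<mu> = UNIV" using sets_eq_imp_space_eq[OF S] by simp
  have ne: "msupp \<mu> \<noteq> {}"
  proof
    assume E: "msupp \<mu> = {}"
    have "emeasure \<mu> (\<Union>n::nat. {-real n..real n}) = 0"
    proof (rule emeasure_UN_eq_0)
      show "range (\<lambda>n::nat. {-real n..real n}) \<subseteq> sets \<mu>" unfolding S by auto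
      fix n :: nat
      show "emeasure \<mu> {-real n..real n} = 0"
        by (rule null_interval[OF S]) (rule ns, simp add: E)
    qed
    moreover have "(\<Union>n::nat. {-real n..real n}) = UNIV"
    proof -
      have "x \<in> (\<Union>n::nat. {-real n..real n})" for x :: real
      proof -
        obtain n :: nat where "\<bar>x\<bar> \<le> real n" using real_arch_simple by blast
        then have "x \<in> {-real n..real n}" by auto
        then show ?thesis by blast
      qed
      then show ?thesis by blast
    qed
    moreover have "emeasure \<mu> UNIV = 1" using prob_space.emeasure_space_1[OF P] sp by simp
    ultimately show False by simp
  qed
  have bdd: "bdd_above (msupp \<mu>)" using B by (rule bounded_imp_bdd_above)
  have up: "s \<le> b" if "s \<in> msupp \<mu>" for s using cSup_upper[OF that bdd] b by simp
  from ne obtain s where s: "s \<in> msupp \<mu>" by blast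
  show "0 \<le> b" using up[OF s] N s by auto
  define Nn where "Nn n = {-(real n+1)..-1/(real n+1)} \<union> {b+1/(real n+1)..b+real n+1}" for n :: nat
  have null: "emeasure \<mu> (Nn n) = 0" for n
  proof -
    have "emeasure \<mu> (Nn n) \<le> emeasure \<mu> {-(real n+1)..-1/(real n+1)} + emeasure \<mu> {b+1/(real n+1)..b+real n+1}"
      unfolding Nn_def by (rule emeasure_subadditive) (unfold S, auto)
    also have "emeasure \<mu> {-(real n+1)..-1/(real n+1)} = 0"
    proof (rule null_interval[OF S])
      fix x assume "-(real n+1) \<le> x" "x \<le> -1/(real n+1)"
      moreover have "1/(real n+1) > 0" by simp
      ultimately have "x < 0" by linarith
      then have "x \<notin> msupp \<mu>" using N by auto
      then show "\<exists>e>0. emeasure \<mu> (ball x e) = 0" by (rule ns)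
    qed
    also have "emeasure \<mu> {b+1/(real n+1)..b+real n+1} = 0"
    proof (rule null_interval[OF S])
      fix x assume "b+1/(real n+1) \<le> x" "x \<le> b+real n+1"
      moreover have "1/(real n+1) > 0" by simp
      ultimately have "x > b" by linarith
      then have "x \<notin> msupp \<mu>" using up by (meson not_le)
      then show "\<exists>e>0. emeasure \<mu> (ball x e) = 0" by (rule ns)
    qed
    finally show ?thesis by simp
  qed
  have "(\<Union>n. Nn n) \<in> null_sets \<mu>"
  proof -
    have "range Nn \<subseteq> sets \<mu>" unfolding S Nn_def by auto
    then have "emeasure \<mu> (\<Union>n. Nn n) = 0" using emeasure_UN_eq_0[of \<mu> Nn] null by blast
    moreover have "(\<Union>n. Nn n) \<in> sets \<mu>" using \<open>range Nn \<subseteq> sets \<mu>\<close> by blast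
    ultimately show ?thesis by (simp add: null_sets_def)
  qed
  then show "AE t in \<mu>. 0 \<le> t \<and> t \<le> b"
  proof (rule AE_I')
    show "{x \<in> space \<mu>. \<not> (0 \<le> x \<and> x \<le> b)} \<subseteq> (\<Union>n. Nn n)"
    proof
      fix x assume "x \<in> {x \<in> space \<mu>. \<not> (0 \<le> x \<and> x \<le> b)}"
      then have "x < 0 \<or> x > b" by auto
      then show "x \<in> (\<Union>n. Nn n)"
      proof
        assume "x < 0"
        then obtain n where "-x \<le> real n + 1" "1/(real n+1) \<le> -x" using arch_aux[of "-x"] by auto
        then have "x \<in> Nn n" unfolding Nn_def by auto
        then show ?thesis by blast
      next
        assume "x > b"
        then obtain n where "x - b \<le> real n + 1" "1/(real n+1) \<le> x - b" using arch_aux[of "x - b"] by auto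
        then have "x \<in> Nn n" unfolding Nn_def by auto
        then show ?thesis by blast
      qed
    qed
  qed
qed




definition KK :: "real \<Rightarrow> real \<Rightarrow> real \<Rightarrow> real" where
  "KK q w f = (f * (2*q + (1-q)*w) + (1-q)*w^2) / (q + (1-q)*w)"

definition GG :: "real \<Rightarrow> real \<Rightarrow> real \<Rightarrow> real" where
  "GG q a m = -2*a^2*(q*a+1-q) / ((2*m-a)*(q*a+1-q) + a*(q*(2*m-a)+1-q))"

lemma KK_lin:
  assumes q: "0 < q" "q \<le> 1" and w: "0 < w" and f: "f' \<le> f"
  shows "KK q w f' \<le> KK q w f"
proof -
  have d: "q + (1-q)*w > 0" using q w by (smt (verit) mult_nonneg_nonneg)
  have "f' * (2*q + (1-q)*w) \<le> f * (2*q + (1-q)*w)"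
    using f q w by (intro mult_right_mono) (auto intro!: add_nonneg_nonneg mult_nonneg_nonneg)
  then show ?thesis unfolding KK_def using d by (intro divide_right_mono) auto
qed

lemma KK_diag:
  assumes q: "0 < q" "q \<le> 1" and w: "0 < w1" "w1 \<le> w2" and S: "0 \<le> S"
  shows "KK q w2 (S - w2) \<le> KK q w1 (S - w1)"
proof -
  define u where "u = 1 - q"
  have u: "0 \<le> u" using q u_def by simp
  have d1: "q + u*w1 > 0" using q w u by (smt (verit) mult_nonneg_nonneg)
  have d2: "q + u*w2 > 0" using q w u by (smt (verit) mult_nonneg_nonneg)
  have e: "KK q w (S - w) = (S*(2*q+u*w) - 2*q*w)/(q+u*w)" for w
    unfolding KK_def u_def by (simp add: algebra_simps power2_eq_square)
  have "(S*(2*q+u*w2) - 2*q*w2)*(q+u*w1) \<le> (S*(2*q+u*w1) - 2*q*w1)*(q+u*w2)"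
  proof -
    have "(S*(2*q+u*w1) - 2*q*w1)*(q+u*w2) - (S*(2*q+u*w2) - 2*q*w2)*(q+u*w1)
       = (w2 - w1)*(S*q*u + 2*q^2)"
      by (simp add: algebra_simps power2_eq_square)
    also have "\<dots> \<ge> 0" using w q u S by (intro mult_nonneg_nonneg add_nonneg_nonneg) auto
    finally show ?thesis by simp
  qed
  then show ?thesis unfolding e using d1 d2 by (simp add: divide_simps mult.commute)
qed

lemma KK_mono:
  assumes q: "0 < q" "q \<le> 1" and w: "0 < w1" "w1 \<le> w2"
    and f: "f2 \<le> f1" "f2 + w2 \<le> f1 + w1" "0 \<le> f2"
  shows "KK q w2 f2 \<le> KK q w1 f1"
proof -
  have "KK q w2 f2 \<le> KK q w2 ((f1 + w1) - w2)"
    using f w q by (intro KK_lin) auto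
  also have "\<dots> \<le> KK q w1 ((f1 + w1) - w1)"
    using f w q by (intro KK_diag) auto
  finally show ?thesis by simp
qed

lemma GG_KK:
  assumes q: "0 < q" "q \<le> 1" and a: "1 \<le> a"
  shows "GG q a m = -2 / KK q (1/a) ((2*m-a)/a^2)"
proof -
  have "q*1 \<le> q*a" using q a by (intro mult_left_mono) auto
  then have p: "q*a+1-q > 0" using q by linarith
  have k: "KK q (1/a) ((2*m-a)/a^2) = ((2*m-a)*(2*q*a+(1-q)) + (1-q)*a) / (a^2*(q*a+1-q))"
  proof -
    have a0: "a \<noteq> 0" using a by simp
    have X: "(2*m-a)/a^2 * (2*q + (1-q)*(1/a)) + (1-q)*(1/a)^2
        = ((2*m-a)*(2*q*a+(1-q)) + (1-q)*a) / a^3"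
      using a0 by (simp add: field_simps power2_eq_square power3_eq_cube)
    have Y: "q + (1-q)*(1/a) = (q*a+1-q)/a"
      using a0 by (simp add: field_simps)
    show ?thesis unfolding KK_def X Y using a0 p
      by (simp add: power2_eq_square power3_eq_cube)
  qed
  have "(2*m-a)*(q*a+1-q) + a*(q*(2*m-a)+1-q) = (2*m-a)*(2*q*a+(1-q)) + (1-q)*a"
    by (simp add: algebra_simps)
  then show ?thesis unfolding GG_def k by (simp add: divide_divide_eq_right algebra_simps)
qed

lemma KK_pos:
  assumes q: "0 < q" "q \<le> 1" and w: "0 < w" and f: "0 < f"
  shows "KK q w f > 0"
  unfolding KK_def using q w f
  by (intro divide_pos_pos add_pos_nonneg mult_pos_pos) (auto intro!: add_pos_nonneg mult_nonneg_nonneg)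

lemma KK_ge2:
  assumes q: "0 < q" "q \<le> 1" and w: "0 < w" "w \<le> 1" and f: "2 - w \<le> f"
  shows "2 \<le> KK q w f"
proof -
  define u where "u = 1 - q"
  have u: "0 \<le> u" using q u_def by simp
  have d: "q + u*w > 0" using q w u by (smt (verit) mult_nonneg_nonneg)
  have "(2 - w)*(2*q + u*w) \<le> f*(2*q+u*w)"
    using f q w u by (intro mult_right_mono) auto
  moreover have "2*(q+u*w) \<le> (2 - w)*(2*q + u*w) + u*w^2"
  proof -
    have "(2 - w)*(2*q + u*w) + u*w^2 - 2*(q+u*w) = 2*q*(1 - w)"
      by (simp add: algebra_simps power2_eq_square)
    also have "\<dots> \<ge> 0" using q w by auto
    finally show ?thesis by simp
  qed
  ultimately have "2*(q+u*w) \<le> f*(2*q+u*w) + u*w^2" by simp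
  then show ?thesis unfolding KK_def u_def[symmetric] using d by (simp add: le_divide_eq)
qed




definition rr :: "real \<Rightarrow> real \<Rightarrow> real" where "rr x t = x^2/(x^2-t^2)"
definition mm :: "real measure \<Rightarrow> nat \<Rightarrow> real \<Rightarrow> real" where
  "mm \<mu> k x = (\<integral>t. rr x t ^ k \<partial>\<mu>)"

lemma sq_lt: "b < x \<Longrightarrow> 0 \<le> t \<Longrightarrow> t \<le> (b::real) \<Longrightarrow> t^2 < x^2"
  by (rule power_strict_mono) auto

lemma rr_bounds:
  assumes "b < x" "0 \<le> t" "t \<le> (b::real)"
  shows "1 \<le> rr x t" "rr x t \<le> x^2/(x^2-b^2)"
proof -
  have t: "t^2 < x^2" using sq_lt assms by blast
  have "b^2 < x^2" using assms by (intro power_strict_mono) auto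
  have t0: "0 \<le> t^2" by simp
  have tb: "t^2 \<le> b^2" using assms by (intro power_mono) auto
  show "1 \<le> rr x t" unfolding rr_def using t t0 by (simp add: le_divide_eq)
  show "rr x t \<le> x^2/(x^2-b^2)" unfolding rr_def using t tb \<open>b^2 < x^2\<close>
    by (intro divide_left_mono) (auto intro: mult_pos_pos)
qed

lemma ea: "(x::real) \<noteq> 0 \<Longrightarrow> d \<noteq> 0 \<Longrightarrow> -(2/x)*((x^2/d)^2 - (x^2/d)^1) = -2*x*(x^2-d)/d^2"
  by (simp add: field_simps power2_eq_square)

lemma eb: "(x::real) \<noteq> 0 \<Longrightarrow> d \<noteq> 0 \<Longrightarrow> -(4/x)*((x^2/d)^3 - (x^2/d)^2) = of_nat 2 * (-2*x*(x^2-d)/d^2 * (x^2/d)^(2 - Suc 0))"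
  by (simp add: field_simps power2_eq_square power3_eq_cube)

lemma rr_d:
  assumes d: "x^2 - t^2 \<noteq> (0::real)"
  shows "((\<lambda>x. rr x t) has_real_derivative -2*x*(x^2-(x^2-t^2))/(x^2-t^2)^2) (at x)"
proof -
  have a: "((\<lambda>x. x^2) has_real_derivative 2*x) (at x)" by (auto intro!: derivative_eq_intros)
  have b: "((\<lambda>x. x^2 - t^2) has_real_derivative 2*x) (at x)" by (auto intro!: derivative_eq_intros)
  have "((\<lambda>x. x^2/(x^2-t^2)) has_real_derivative ((2*x)*(x^2-t^2) - x^2*(2*x))/((x^2-t^2)*(x^2-t^2))) (at x)"
    using DERIV_divide[OF a b] d by simp
  moreover have "((2*x)*(x^2-t^2) - x^2*(2*x))/((x^2-t^2)*(x^2-t^2)) = -2*x*(x^2-(x^2-t^2))/(x^2-t^2)^2"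
    by (simp add: algebra_simps power2_eq_square)
  ultimately show ?thesis unfolding rr_def by simp
qed

lemma rr_deriv1:
  assumes "b < x" "0 \<le> t" "t \<le> (b::real)"
  shows "((\<lambda>x. rr x t ^ 1) has_real_derivative -(2/x)*(rr x t^2 - rr x t^1)) (at x)"
proof -
  have t: "x^2 - t^2 \<noteq> 0" "x \<noteq> 0" using sq_lt[OF assms] assms by auto
  show ?thesis using rr_d[OF t(1)] ea[OF t(2) t(1)] unfolding rr_def by simp
qed

lemma rr_deriv2:
  assumes "b < x" "0 \<le> t" "t \<le> (b::real)"
  shows "((\<lambda>x. rr x t ^ 2) has_real_derivative -(4/x)*(rr x t^3 - rr x t^2)) (at x)"
proof -
  have t: "x^2 - t^2 \<noteq> 0" "x \<noteq> 0" using sq_lt[OF assms] assms by auto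
  have "((\<lambda>x. rr x t ^ 2) has_real_derivative of_nat 2 * (-2*x*(x^2-(x^2-t^2))/(x^2-t^2)^2 * rr x t ^ (2 - Suc 0))) (at x)"
    by (rule DERIV_power[OF rr_d[OF t(1)]])
  then show ?thesis using eb[OF t(2) t(1)] unfolding rr_def by simp
qed

lemma cont_aux:
  "continuous_on ({b<..} \<times> {0..b}) (\<lambda>(x,t). -(c/x)*(rr x t^(Suc k) - rr x t^k))"
proof -
  have "\<forall>p\<in>{b<..} \<times> {0..b}. fst p ^ 2 - snd p ^2 \<noteq> 0 \<and> fst p \<noteq> 0"
  proof
    fix p assume "p \<in> {b<..} \<times> {0..(b::real)}"
    then have "snd p ^2 < fst p^2" "fst p \<noteq> 0" using sq_lt[of b "fst p" "snd p"] by auto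
    then show "fst p ^ 2 - snd p ^2 \<noteq> 0 \<and> fst p \<noteq> 0" by simp
  qed
  then show ?thesis unfolding rr_def case_prod_unfold
    by (intro continuous_intros) auto
qed

context
  fixes \<mu> :: "real measure" and b :: real
  assumes P: "prob_space \<mu>" and S: "sets \<mu> = sets borel" and b0: "0 \<le> b"
    and AEb: "AE t in \<mu>. 0 \<le> t \<and> t \<le> b"
begin

lemma meas_rr: "(\<lambda>t. rr x t ^ k) \<in> borel_measurable \<mu>"
  unfolding measurable_cong_sets[OF S refl] rr_def by measurable

lemma int_rr:
  assumes "b < x" shows "integrable \<mu> (\<lambda>t. rr x t ^ k)"
proof -
  interpret prob_space \<mu> by (rule P)
  show ?thesis
  proof (rule integrable_const_bound[where B="(x^2/(x^2-b^2))^k"])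
    show "AE t in \<mu>. norm (rr x t ^ k) \<le> (x^2/(x^2-b^2))^k"
      using AEb
    proof eventually_elim
      fix t assume "0 \<le> t \<and> t \<le> b"
      then have "1 \<le> rr x t" "rr x t \<le> x^2/(x^2-b^2)" using rr_bounds assms by auto
      then show "norm (rr x t ^ k) \<le> (x^2/(x^2-b^2))^k"
        by (simp add: abs_of_nonneg power_mono)
    qed
  qed (rule meas_rr)
qed

lemma mm0: "mm \<mu> 0 x = 1"
  unfolding mm_def using prob_space.prob_space[OF P] by simp

lemma int_lin:
  assumes "b < x"
  shows "(\<integral>t. \<alpha> * rr x t ^ i + \<beta> * rr x t ^ j + \<gamma> * rr x t ^ k \<partial>\<mu>)
      = \<alpha> * mm \<mu> i x + \<beta> * mm \<mu> j x + \<gamma> * mm \<mu> k x"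
  using int_rr[OF assms] unfolding mm_def by (simp add: integral_add)

lemma mm1_ge: assumes "b < x" shows "1 \<le> mm \<mu> 1 x"
proof -
  have "(\<integral>t. 1 \<partial>\<mu>) \<le> (\<integral>t. rr x t ^ 1 \<partial>\<mu>)"
  proof (rule integral_mono_AE)
    show "integrable \<mu> (\<lambda>t. rr x t ^ 1)" by (rule int_rr[OF assms])
    show "integrable \<mu> (\<lambda>t. 1::real)" using prob_space.finite_measure[OF P] by (simp add: finite_measure.integrable_const)
    show "AE t in \<mu>. 1 \<le> rr x t ^ 1" using AEb by eventually_elim (use rr_bounds assms in auto)
  qed
  then show ?thesis unfolding mm_def using prob_space.prob_space[OF P] by simp
qed

lemma cs2: assumes "b < x" shows "(mm \<mu> 1 x)^2 \<le> mm \<mu> 2 x"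
proof -
  define a where "a = mm \<mu> 1 x"
  have "0 \<le> (\<integral>t. 1 * rr x t ^ 2 + (-2*a) * rr x t ^ 1 + a^2 * rr x t ^ 0 \<partial>\<mu>)"
  proof (rule integral_nonneg_AE)
    show "AE t in \<mu>. 0 \<le> 1 * rr x t ^ 2 + (-2*a) * rr x t ^ 1 + a^2 * rr x t ^ 0"
    proof (rule AE_I2)
      fix t
      have "1 * rr x t ^ 2 + (-2*a) * rr x t ^ 1 + a^2 * rr x t ^ 0 = (rr x t - a)^2"
        by (simp add: power2_eq_square algebra_simps)
      then show "0 \<le> 1 * rr x t ^ 2 + (-2*a) * rr x t ^ 1 + a^2 * rr x t ^ 0" by simp
    qed
  qed
  also have "\<dots> = mm \<mu> 2 x - a^2" unfolding int_lin[OF assms] mm0 a_def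
    by (simp add: power2_eq_square)
  finally show ?thesis unfolding a_def by simp
qed

lemma cs3: assumes "b < x" shows "(mm \<mu> 2 x)^2 \<le> mm \<mu> 1 x * mm \<mu> 3 x"
proof -
  define a where "a = mm \<mu> 2 x / mm \<mu> 1 x"
  have m1: "mm \<mu> 1 x \<ge> 1" by (rule mm1_ge[OF assms])
  have "0 \<le> (\<integral>t. a^2 * rr x t ^ 1 + (-2*a) * rr x t ^ 2 + 1 * rr x t ^ 3 \<partial>\<mu>)"
  proof (rule integral_nonneg_AE)
    show "AE t in \<mu>. 0 \<le> a^2 * rr x t ^ 1 + (-2*a) * rr x t ^ 2 + 1 * rr x t ^ 3"
      using AEb
    proof eventually_elim
      fix t assume "0 \<le> t \<and> t \<le> b"
      then have r: "0 \<le> rr x t" using rr_bounds[OF assms] by (meson order.trans zero_le_one)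
      have "a^2 * rr x t ^ 1 + (-2*a) * rr x t ^ 2 + 1 * rr x t ^ 3 = rr x t * (a - rr x t)^2"
        by (simp add: power2_eq_square power3_eq_cube algebra_simps)
      then show "0 \<le> a^2 * rr x t ^ 1 + (-2*a) * rr x t ^ 2 + 1 * rr x t ^ 3" using r by simp
    qed
  qed
  also have "\<dots> = a^2 * mm \<mu> 1 x - 2*a*mm \<mu> 2 x + mm \<mu> 3 x" unfolding int_lin[OF assms] by simp
  also have "\<dots> = mm \<mu> 3 x - (mm \<mu> 2 x)^2 / mm \<mu> 1 x"
    unfolding a_def using m1 by (simp add: field_simps power2_eq_square)
  finally show ?thesis using m1 by (simp add: divide_le_eq mult.commute)
qed

lemma der_m1:
  assumes "b < x"
  shows "(mm \<mu> 1 has_real_derivative -(2/x)*(mm \<mu> 2 x - mm \<mu> 1 x)) (at x)"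
proof -
  have "((\<lambda>x. \<integral>t. rr x t ^ 1 \<partial>\<mu>) has_real_derivative (\<integral>t. -(2/x)*(rr x t^2 - rr x t^1) \<partial>\<mu>)) (at x)"
  proof (rule deriv_int[where K="{0..b}" and U="{b<..}"])
    show "AE t in \<mu>. t \<in> {0..b}" using AEb by auto
    show "integrable \<mu> (\<lambda>t. -(2/x)*(rr x t^2 - rr x t^1))"
      using int_rr[OF assms, of 2] int_rr[OF assms, of 1] by (intro integrable_mult_right integrable_diff) auto
    show "continuous_on ({b<..} \<times> {0..b}) (\<lambda>(x,t). -(2/x)*(rr x t^2 - rr x t^1))"
      using cont_aux[of b 2 1] by (simp add: power2_eq_square)
  qed (use P int_rr[where k=1, simplified] rr_deriv1 assms in auto)
  moreover have "(\<integral>t. -(2/x)*(rr x t^2 - rr x t^1) \<partial>\<mu>) = -(2/x)*(mm \<mu> 2 x - mm \<mu> 1 x)"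
    using int_rr[OF assms, of 2] int_rr[OF assms, of 1] unfolding mm_def by (simp add: integral_diff)
  moreover have "x \<noteq> 0" using assms b0 by auto
  ultimately show ?thesis unfolding mm_def[abs_def] by simp
qed

lemma der_m2:
  assumes "b < x"
  shows "(mm \<mu> 2 has_real_derivative -(4/x)*(mm \<mu> 3 x - mm \<mu> 2 x)) (at x)"
proof -
  have "((\<lambda>x. \<integral>t. rr x t ^ 2 \<partial>\<mu>) has_real_derivative (\<integral>t. -(4/x)*(rr x t^3 - rr x t^2) \<partial>\<mu>)) (at x)"
  proof (rule deriv_int[where K="{0..b}" and U="{b<..}"])
    show "AE t in \<mu>. t \<in> {0..b}" using AEb by auto
    show "integrable \<mu> (\<lambda>t. -(4/x)*(rr x t^3 - rr x t^2))"
      using int_rr[OF assms] by (intro integrable_mult_right integrable_diff) auto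
    show "continuous_on ({b<..} \<times> {0..b}) (\<lambda>(x,t). -(4/x)*(rr x t^3 - rr x t^2))"
      using cont_aux[of b 4 2] by simp
  qed (use P int_rr rr_deriv2 assms in auto)
  moreover have "(\<integral>t. -(4/x)*(rr x t^3 - rr x t^2) \<partial>\<mu>) = -(4/x)*(mm \<mu> 3 x - mm \<mu> 2 x)"
    using int_rr[OF assms] unfolding mm_def by simp
  moreover have "x \<noteq> 0" using assms b0 by auto
  ultimately show ?thesis unfolding mm_def[abs_def] by simp
qed

end



lemma quot_neg: "(k::real) \<noteq> 0 \<Longrightarrow> (N/k) / (-(D/k)) = -(N/D)"
  by (cases "D = 0") (simp_all add: field_simps)

lemma hnum_le:
  fixes a m n z c :: real
  assumes "1 \<le> a" "a^2 \<le> m" "m^2 \<le> a*n" "0 < z" "0 \<le> c"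
  shows "(2*(-(4/z)*(n-m)) - c*(-(2/z)*(m-a)))*a^2 - (2*m - c*a)*(2*a*(-(2/z)*(m-a))) \<le> 0"
proof -
  have e: "(2*(-(4/z)*(n-m)) - c*(-(2/z)*(m-a)))*a^2 - (2*m - c*a)*(2*a*(-(2/z)*(m-a)))
      = -(a/z)*(8*(a*n - m^2) + 2*c*a*(m-a))" 
    using assms by (simp add: field_simps power2_eq_square)
  have "a \<le> a^2" using assms by (simp add: power2_eq_square)
  then have X: "0 \<le> 8*(a*n - m^2) + 2*c*a*(m-a)" using assms by (intro add_nonneg_nonneg mult_nonneg_nonneg) auto
  have Z: "0 \<le> a/z" using assms by simp
  have "0 \<le> (a/z)*(8*(a*n - m^2) + 2*c*a*(m-a))" by (rule mult_nonneg_nonneg[OF Z X])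
  then show ?thesis unfolding e by linarith
qed

context
  fixes \<mu> :: "real measure" and b :: real
  assumes P: "prob_space \<mu>" and S: "sets \<mu> = sets borel" and b0: "0 \<le> b"
    and AEb: "AE t in \<mu>. 0 \<le> t \<and> t \<le> b"
begin

lemma phi_eq:
  assumes "b < x"
  shows "phi \<mu> x s = s * (mm \<mu> 1 x / x) + (1-s)/x"
proof -
  have x: "x \<noteq> 0" using assms b0 by auto
  have "(\<lambda>t. x/(x^2-t^2)) = (\<lambda>t. rr x t ^ 1 / x)"
    using x by (auto simp: rr_def power2_eq_square)
  then show ?thesis unfolding phi_def mm_def by simp
qed

lemma phi'_eq:
  assumes "b < x"
  shows "phi' \<mu> x s = -(s * ((2 * mm \<mu> 2 x - mm \<mu> 1 x)/x^2) + (1-s)/x^2)"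
proof -
  have x: "x \<noteq> 0" using assms b0 by auto
  have "(\<integral>t. (x^2+t^2)/(x^2-t^2)^2 \<partial>\<mu>) = (\<integral>t. (2 * rr x t ^ 2 - rr x t ^ 1) / x^2 \<partial>\<mu>)"
  proof (rule integral_cong_AE)
    show "(\<lambda>t. (x^2+t^2)/(x^2-t^2)^2) \<in> borel_measurable \<mu>"
      unfolding measurable_cong_sets[OF S refl] by measurable
    show "(\<lambda>t. (2 * rr x t ^ 2 - rr x t ^ 1) / x^2) \<in> borel_measurable \<mu>"
      unfolding measurable_cong_sets[OF S refl] rr_def by measurable
    show "AE t in \<mu>. (x^2+t^2)/(x^2-t^2)^2 = (2 * rr x t ^ 2 - rr x t ^ 1) / x^2"
      using AEb
    proof eventually_elim
      fix t assume t: "0 \<le> t \<and> t \<le> b"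
      have d: "x^2 - t^2 \<noteq> 0" using sq_lt[of b x t] t assms by auto
      have g: "\<And>d. d \<noteq> 0 \<Longrightarrow> (2 * (x^2/d)^2 - (x^2/d)^1)/x^2 = (2*x^2 - d)/d^2"
        using x by (simp add: field_simps power2_eq_square)
      show "(x^2+t^2)/(x^2-t^2)^2 = (2 * rr x t ^ 2 - rr x t ^ 1) / x^2"
        unfolding rr_def g[OF d] by simp
    qed
  qed
  also have "\<dots> = (2 * mm \<mu> 2 x - mm \<mu> 1 x)/x^2"
    using int_rr[OF P S b0 AEb assms, of 2] int_rr[OF P S b0 AEb assms, of 1]
    unfolding mm_def by (simp add: integral_diff)
  finally show ?thesis unfolding phi'_def by simp
qed

lemma Phi_eq:
  assumes "b < x"
  shows "Phi \<mu> q x = GG q (mm \<mu> 1 x) (mm \<mu> 2 x)"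
proof -
  have x: "x \<noteq> 0" using assms b0 by auto
  define a where "a = mm \<mu> 1 x"
  define m where "m = mm \<mu> 2 x"
  have "Phi \<mu> q x = (2*a^2*(q*a+1-q) / x^3) / (-(((2*m-a)*(q*a+1-q) + a*(q*(2*m-a)+1-q)) / x^3))"
  proof -
    have n: "2 * ((1 * (a / x) + (1 - 1) / x) * (q * (a / x) + (1 - q) / x)) * (1 * (a / x) + (1 - 1) / x)
         = 2*a^2*(q*a+1-q) / x^3"
      using x by (simp add: field_simps power2_eq_square power3_eq_cube)
    have d: "- (1 * ((2 * m - a) / x\<^sup>2) + (1 - 1) / x\<^sup>2) * (q * (a / x) + (1 - q) / x) +
        (1 * (a / x) + (1 - 1) / x) * - (q * ((2 * m - a) / x\<^sup>2) + (1 - q) / x\<^sup>2)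
        = (-(((2*m-a)*(q*a+1-q) + a*(q*(2*m-a)+1-q)) / x^3))"
      using x by (simp add: field_simps power2_eq_square power3_eq_cube)
    show ?thesis unfolding Phi_def Dmu_def Dmu'_def phi_eq[OF assms] phi'_eq[OF assms]
      a_def[symmetric] m_def[symmetric] n d ..
  qed
  also have "\<dots> = GG q a m" unfolding GG_def using x by (subst quot_neg) simp_all
  finally show ?thesis unfolding a_def m_def .
qed

end



lemma den_pos:
  fixes a m q :: real
  assumes "1 \<le> a" "a^2 \<le> m" "0 < q" "q \<le> 1"
  shows "0 < (2*m-a)*(q*a+1-q) + a*(q*(2*m-a)+1-q)"
proof -
  have "a \<le> a^2" using assms by (simp add: power2_eq_square)
  then have c: "a \<le> 2*m - a" using assms by simp
  have "q*1 \<le> q*a" using assms by (intro mult_left_mono) auto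
  then have p: "0 < q*a+1-q" using assms by linarith
  have "q*a \<le> q*(2*m-a)" using assms c by (intro mult_left_mono) auto
  then have p2: "0 < q*(2*m-a)+1-q" using assms \<open>q*1 \<le> q*a\<close> by linarith
  have "0 < (2*m-a)*(q*a+1-q)" using c assms p by (intro mult_pos_pos) auto
  moreover have "0 < a*(q*(2*m-a)+1-q)" using assms p2 by (intro mult_pos_pos) auto
  ultimately show ?thesis by linarith
qed

context
  fixes \<mu> :: "real measure" and b :: real
  assumes P: "prob_space \<mu>" and S: "sets \<mu> = sets borel" and b0: "0 \<le> b"
    and AEb: "AE t in \<mu>. 0 \<le> t \<and> t \<le> b"
begin

lemma h_mono:
  assumes c: "0 \<le> c" and xy: "b < x" "x \<le> y"
  shows "(2*mm \<mu> 2 y - c*mm \<mu> 1 y)/(mm \<mu> 1 y)^2 \<le> (2*mm \<mu> 2 x - c*mm \<mu> 1 x)/(mm \<mu> 1 x)^2"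
proof (rule DERIV_nonpos_imp_nonincreasing[OF xy(2)])
  fix z assume z: "x \<le> z" "z \<le> y"
  then have zb: "b < z" using xy by simp
  define a where "a = mm \<mu> 1 z"
  define m where "m = mm \<mu> 2 z"
  define n where "n = mm \<mu> 3 z"
  have d1: "(mm \<mu> 1 has_real_derivative -(2/z)*(m - a)) (at z)"
    unfolding a_def m_def by (rule der_m1[OF P S b0 AEb zb])
  have d2: "(mm \<mu> 2 has_real_derivative -(4/z)*(n - m)) (at z)"
    unfolding n_def m_def by (rule der_m2[OF P S b0 AEb zb])
  have a1: "1 \<le> a" unfolding a_def by (rule mm1_ge[OF P S b0 AEb zb])
  have N: "((\<lambda>z. 2*mm \<mu> 2 z - c*mm \<mu> 1 z) has_real_derivative 2*(-(4/z)*(n - m)) - c*(-(2/z)*(m - a))) (at z)"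
    by (rule DERIV_diff[OF DERIV_cmult[OF d2] DERIV_cmult[OF d1]])
  have Dn: "((\<lambda>z. (mm \<mu> 1 z)^2) has_real_derivative 2*a*(-(2/z)*(m - a))) (at z)"
    by (rule DERIV_cong[OF DERIV_power[OF d1]]) (simp add: a_def)
  have a0: "(mm \<mu> 1 z)^2 \<noteq> 0" using a1 unfolding a_def by simp
  have "((\<lambda>z. (2*mm \<mu> 2 z - c*mm \<mu> 1 z)/(mm \<mu> 1 z)^2) has_real_derivative
      ((2*(-(4/z)*(n-m)) - c*(-(2/z)*(m-a)))*a^2 - (2*m - c*a)*(2*a*(-(2/z)*(m-a)))) / (a^2*a^2)) (at z)"
    using DERIV_divide[OF N Dn a0] unfolding a_def m_def by simp
  moreover have "((2*(-(4/z)*(n-m)) - c*(-(2/z)*(m-a)))*a^2 - (2*m - c*a)*(2*a*(-(2/z)*(m-a)))) / (a^2*a^2) \<le> 0"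
  proof (rule divide_nonpos_pos)
    show "0 < a^2*a^2" using a1 by simp
    show "(2*(-(4/z)*(n-m)) - c*(-(2/z)*(m-a)))*a^2 - (2*m - c*a)*(2*a*(-(2/z)*(m-a))) \<le> 0"
    proof (rule hnum_le[OF a1 _ _ _ c])
      show "a^2 \<le> m" unfolding a_def m_def by (rule cs2[OF P S b0 AEb zb])
      show "m^2 \<le> a*n" unfolding a_def m_def n_def by (rule cs3[OF P S b0 AEb zb])
      show "0 < z" using zb b0 by simp
    qed
  qed
  ultimately show "\<exists>y. ((\<lambda>z. (2*mm \<mu> 2 z - c*mm \<mu> 1 z)/(mm \<mu> 1 z)^2) has_real_derivative y) (at z) \<and> y \<le> 0"
    by blast
qed

lemma m1_mono:
  assumes xy: "b < x" "x \<le> y"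
  shows "mm \<mu> 1 y \<le> mm \<mu> 1 x"
proof (rule DERIV_nonpos_imp_nonincreasing[OF xy(2)])
  fix z assume z: "x \<le> z" "z \<le> y"
  then have zb: "b < z" using xy by simp
  have a1: "1 \<le> mm \<mu> 1 z" by (rule mm1_ge[OF P S b0 AEb zb])
  have "(mm \<mu> 1 z)^2 \<le> mm \<mu> 2 z" by (rule cs2[OF P S b0 AEb zb])
  moreover have "mm \<mu> 1 z \<le> (mm \<mu> 1 z)^2" using a1 by (simp add: power2_eq_square)
  ultimately have "0 \<le> mm \<mu> 2 z - mm \<mu> 1 z" by simp
  moreover have "0 < z" using zb b0 by simp
  ultimately have "-(2/z)*(mm \<mu> 2 z - mm \<mu> 1 z) \<le> 0" by simp
  then show "\<exists>y. (mm \<mu> 1 has_real_derivative y) (at z) \<and> y \<le> 0"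
    using der_m1[OF P S b0 AEb zb] by blast
qed

lemma m_cont:
  shows "continuous_on {b<..} (mm \<mu> 1)" "continuous_on {b<..} (mm \<mu> 2)"
  using der_m1[OF P S b0 AEb] der_m2[OF P S b0 AEb]
  by (auto intro!: continuous_at_imp_continuous_on DERIV_isCont)

end

theorem mainTheorem12:
  fixes \<mu> :: "real measure" and q b :: real
  assumes "prob_space \<mu>"
    and "sets \<mu> = sets borel"
    and "bounded (msupp \<mu>)"
    and "msupp \<mu> \<subseteq> {0..}"
    and "b = Sup (msupp \<mu>)"
    and "0 < q" and "q \<le> 1"
  shows "continuous_on {b<..} (Phi \<mu> q)
    \<and> (\<forall>x y. b < x \<longrightarrow> x \<le> y \<longrightarrow> Phi \<mu> q y \<le> Phi \<mu> q x)
    \<and> (\<forall>x. b < x \<longrightarrow> Phi \<mu> q x \<in> {-1..0})"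
proof -
  note P = assms(1) and S = assms(2) and q = assms(6,7)
  have b0: "0 \<le> b" and AEb: "AE t in \<mu>. 0 \<le> t \<and> t \<le> b"
    using supp_facts[OF assms(1-5)] by auto
  note ctx = P S b0 AEb
  define w where "w x = 1 / mm \<mu> 1 x" for x
  define f where "f x = (2 * mm \<mu> 2 x - mm \<mu> 1 x) / (mm \<mu> 1 x)^2" for x
  have a1: "1 \<le> mm \<mu> 1 x" if "b < x" for x by (rule mm1_ge[OF ctx that])
  have c2: "(mm \<mu> 1 x)^2 \<le> mm \<mu> 2 x" if "b < x" for x by (rule cs2[OF ctx that])
  have w: "0 < w x" "w x \<le> 1" if "b < x" for x using a1[OF that] unfolding w_def by auto
  have fw: "2 - w x \<le> f x" if "b < x" for x
  proof -
    have a0: "mm \<mu> 1 x \<noteq> 0" using a1[OF that] by simp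
    have "f x - (2 - w x) = 2 * (mm \<mu> 2 x - (mm \<mu> 1 x)^2) / (mm \<mu> 1 x)^2"
      unfolding f_def w_def using a0 by (simp add: field_simps power2_eq_square)
    also have "\<dots> \<ge> 0" using c2[OF that] by simp
    finally show ?thesis by simp
  qed
  have Phi_K: "Phi \<mu> q x = -2 / KK q (w x) (f x)" if "b < x" for x
    unfolding Phi_eq[OF ctx that] GG_KK[OF q a1[OF that]] w_def f_def ..
  have K2: "2 \<le> KK q (w x) (f x)" if "b < x" for x
    by (rule KK_ge2[OF q w[OF that] fw[OF that]])
  have range: "Phi \<mu> q x \<in> {-1..0}" if "b < x" for x
  proof -
    have K: "2 \<le> KK q (w x) (f x)" by (rule K2[OF that])
    then have "2 / KK q (w x) (f x) \<le> 1" by simp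
    moreover have "0 \<le> 2 / KK q (w x) (f x)" using K by simp
    ultimately show ?thesis unfolding Phi_K[OF that] by simp
  qed
  have mono: "Phi \<mu> q y \<le> Phi \<mu> q x" if xy: "b < x" "x \<le> y" for x y
  proof -
    have yb: "b < y" using xy by simp
    have "w x \<le> w y" unfolding w_def
      using m1_mono[OF ctx xy] a1[OF yb] by (intro divide_left_mono) auto
    moreover have "f y \<le> f x" unfolding f_def using h_mono[OF ctx _ xy, of 1] by simp
    moreover have "f y + w y \<le> f x + w x"
    proof -
      have e: "f z + w z = (2 * mm \<mu> 2 z - 0 * mm \<mu> 1 z) / (mm \<mu> 1 z)^2" if "b < z" for z
        unfolding f_def w_def using a1[OF that] by (simp add: field_simps power2_eq_square)
      show ?thesis unfolding e[OF xy(1)] e[OF yb] by (rule h_mono[OF ctx _ xy]) simp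
    qed
    moreover have "0 \<le> f y" using fw[OF yb] w[OF yb] by simp
    ultimately have "KK q (w y) (f y) \<le> KK q (w x) (f x)"
      using w[OF xy(1)] by (intro KK_mono[OF q]) auto
    then have "2 / KK q (w x) (f x) \<le> 2 / KK q (w y) (f y)"
      using K2[OF yb] by (intro divide_left_mono) auto
    then show ?thesis unfolding Phi_K[OF xy(1)] Phi_K[OF yb] by simp
  qed
  have cont: "continuous_on {b<..} (Phi \<mu> q)"
  proof -
    have "continuous_on {b<..} (\<lambda>x. GG q (mm \<mu> 1 x) (mm \<mu> 2 x))"
    proof -
      have dp: "\<forall>x\<in>{b<..}. (2*mm \<mu> 2 x - mm \<mu> 1 x)*(q*mm \<mu> 1 x+1-q) + mm \<mu> 1 x*(q*(2*mm \<mu> 2 x - mm \<mu> 1 x)+1-q) \<noteq> 0"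
        using den_pos[OF a1 c2 q] by (metis greaterThan_iff order_less_irrefl)
      show ?thesis unfolding GG_def
        by (intro continuous_intros m_cont[OF ctx]) (use dp in auto)
    qed
    then show ?thesis
      by (rule continuous_on_cong[THEN iffD1, rotated 2]) (auto simp: Phi_eq[OF ctx])
  qed
  show ?thesis using cont mono range by blast
qed


end
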